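(* Let $\boldsymbol{\psi}=(\psi_k)_{k\in\mathbb{K}}$ be a regularization of $\psi:\mathcal{M}\to\Theta$ which is continuous at the data-generating distribution $P\in\mathcal{M}$ with respect to a distance $d$, with family of moduli of continuity $(\delta_k)_{k\in\mathbb{K}}$, and suppose there exists a real-valued positive diverging sequence $(r_n)_{n\in\mathbb{N}}$ such that $d(P_n,P)=o_P(r_n^{-1})$. Let $\bar B$, $\bar\delta$, $\mathcal{G}_n$ and $\tilde k_n$ be as in the context. Then $$\|\psi_{\tilde k_n}(P_n)-\psi(P)\|_\Theta=O_P\left(\inf_{k\in\mathcal{G}_n}\{\bar\delta_k(r_n^{-1})+\bar B_k(P)\}\right).$$
   Context: Setting: $\mathbb{Z}\subseteq\mathbb{R}^d$; data $Z_1,Z_2,\dots$ IID with law $P$; $\mathbf{P}$ the product probability on $\mathbb{Z}^\infty$ (to which $o_P,O_P$ refer); $ca(\mathbb{Z})$ the signed Borel measures of finite variation; $\mathcal{D}$ the discretely supported probability measures; $P_n=n^{-1}\sum_{i\le n}\delta_{Z_i}$. $\mathcal{M}$ is a set of Borel probability measures on $\mathbb{Z}$, $(\Theta,\|\cdot\|_\Theta)$ a normed space, $\mathbb{K}\subseteq\mathbb{R}_+$ unbounded above. A regularization is a family $(\psi_k)_{k\in\mathbb{K}}$, $\psi_k:\mathbb{D}_\psi\subseteq ca(\mathbb{Z})\to\Theta$, $\mathbb{D}_\psi\supseteq\mathcal{M}\cup\mathcal{D}$, with $\|\psi_k(Q)-\psi(Q)\|_\Theta\to0$ as $k\to\infty$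 for all $Q\in\mathcal{M}$. A modulus of continuity is a continuous non-decreasing $f:\mathbb{R}_+\to\mathbb{R}_+$ with $f(t)=0$ iff $t=0$; continuity at $P$ w.r.t. $d$ means moduli $(\delta_k)$ with $\|\psi_k(P')-\psi_k(P)\|_\Theta\le\delta_k(d(P',P))$ for all $k$ and $P'\in\mathbb{D}_\psi$. Objects: $k\mapsto\bar B_k(P)$ is a non-increasing function $\mathbb{R}_+\to\mathbb{R}_+$ with $\bar B_k(P)\ge\|\psi_k(P)-\psi(P)\|_\Theta$ for all $k\ge0$ and $\lim_{k\to\infty}\bar B_k(P)=0$; for each $n$, $k\mapsto\bar\delta_k(r_n^{-1})$ is a non-decreasing function $\mathbb{R}_+\to\mathbb{R}_+$ with $\bar\delta_k(r_n^{-1})\ge\delta_k(r_n^{-1})$. For each $n$, $\mathcal{G}_n$ is a (user-specified) finite subset of $\mathbb{K}$. Define $$\mathcal{L}_n=\{k\in\mathcal{G}_n:\ \|\psi_k(P_n)-\psi_{k'}(P_n)\|_\Theta\le4\bar\delta_{k'}(r_n^{-1})\ \text{for all }k'\ge k,\ k'\in\mathcal{G}_n\},$$ and $\tilde k_n=\min\{k:k\in\mathcal{L}_n\}$. *)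

theory Defs
  imports "HOL-Probability.Probability"
begin

definition Zsets :: "'a::euclidean_space set \<Rightarrow> 'a set set" where
  "Zsets Zs = sets (restrict_space borel Zs)"

text \<open>ca(Z): real-valued (hence finite-variation) countably additive signed Borel
  measures on Z, represented canonically as set functions vanishing off the Borel sets.\<close>
definition ca :: "'a::euclidean_space set \<Rightarrow> ('a set \<Rightarrow> real) set" where
  "ca Zs = {\<mu>. \<mu> {} = 0 \<and> (\<forall>A. A \<notin> Zsets Zs \<longrightarrow> \<mu> A = 0) \<and>
     (\<forall>F::nat \<Rightarrow> 'a set. range F \<subseteq> Zsets Zs \<longrightarrow> disjoint_family F \<longrightarrow>
        (\<lambda>i. \<mu> (F i)) sums \<mu> (\<Union>i. F i))}"

definition probs :: "'a::euclidean_space set \<Rightarrow> ('a set \<Rightarrow> real) set" where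
  "probs Zs = {\<mu> \<in> ca Zs. (\<forall>A. 0 \<le> \<mu> A) \<and> \<mu> Zs = 1}"

definition disc :: "'a::euclidean_space set \<Rightarrow> ('a set \<Rightarrow> real) set" where
  "disc Zs = {\<mu> \<in> probs Zs. \<exists>S. countable S \<and> S \<subseteq> Zs \<and> \<mu> S = 1}"

definition emp :: "'a::euclidean_space set \<Rightarrow> nat \<Rightarrow> (nat \<Rightarrow> 'a) \<Rightarrow> 'a set \<Rightarrow> real" where
  "emp Zs n x A = (if A \<in> Zsets Zs then (\<Sum>i<n. indicator A (x i)) / real n else 0)"

definition modulus :: "(real \<Rightarrow> real) \<Rightarrow> bool" where
  "modulus f \<longleftrightarrow> continuous_on {0..} f \<and> (\<forall>s t. 0 \<le> s \<longrightarrow> s \<le> t \<longrightarrow> f s \<le> f t) \<and>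
     (\<forall>t\<ge>0. 0 \<le> f t) \<and> (\<forall>t\<ge>0. f t = 0 \<longleftrightarrow> t = 0)"

text \<open>Outer probability (o_P / O_P are stated with it to avoid measurability issues).\<close>
definition outer_prob :: "'a measure \<Rightarrow> 'a set \<Rightarrow> real" where
  "outer_prob M A = Inf {measure M B | B. B \<in> sets M \<and> A \<subseteq> B}"

text \<open>The Lepski-type set L_n (with dbar k standing for the bound at r_n^{-1}) and its minimum.\<close>
definition lepski_set :: "(real \<Rightarrow> 'm \<Rightarrow> 'b::real_normed_vector) \<Rightarrow> (real \<Rightarrow> real) \<Rightarrow> real set \<Rightarrow> 'm \<Rightarrow> real set" where
  "lepski_set psik dbar G Q =
     {k \<in> G. \<forall>k'\<in>G. k \<le> k' \<longrightarrow> norm (psik k Q - psik k' Q) \<le> 4 * dbar k'}"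

definition ktilde :: "(real \<Rightarrow> 'm \<Rightarrow> 'b::real_normed_vector) \<Rightarrow> (real \<Rightarrow> real) \<Rightarrow> real set \<Rightarrow> 'm \<Rightarrow> real" where
  "ktilde psik dbar G Q = Min (lepski_set psik dbar G Q)"

end

theory Submission
  imports Defs
begin

lemma lepski_core:
  fixes psik :: "real \<Rightarrow> 'm \<Rightarrow> 'b::real_normed_vector" and dbar Bbar :: "real \<Rightarrow> real"
  assumes fin: "finite G" and ne: "G \<noteq> {}"
    and dnn: "\<forall>k\<in>G. 0 \<le> dbar k" and dmono: "\<forall>k\<in>G. \<forall>k'\<in>G. k \<le> k' \<longrightarrow> dbar k \<le> dbar k'"
    and bnn: "\<forall>k\<in>G. 0 \<le> Bbar k" and bmono: "\<forall>k\<in>G. \<forall>k'\<in>G. k \<le> k' \<longrightarrow> Bbar k' \<le> Bbar k"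
    and bnd: "\<forall>k\<in>G. norm (psik k Q - t) \<le> dbar k + Bbar k"
  shows "norm (psik (ktilde psik dbar G Q) Q - t) \<le> 5 * Min ((\<lambda>k. dbar k + Bbar k) ` G)"
proof -
  define L where "L = lepski_set psik dbar G Q"
  have LG: "L \<subseteq> G" unfolding L_def lepski_set_def by auto
  have maxL: "Max G \<in> L"
    unfolding L_def lepski_set_def
  proof (intro CollectI conjI ballI impI)
    show "Max G \<in> G" using fin ne by simp
    fix k' assume a: "k' \<in> G" "Max G \<le> k'"
    then have "k' = Max G" using fin by (meson Max_ge antisym)
    then show "norm (psik (Max G) Q - psik k' Q) \<le> 4 * dbar k'" using dnn a by simp
  qed
  have finL: "finite L" using LG fin finite_subset by blast
  have Lne: "L \<noteq> {}" using maxL by blast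
  define kt where "kt = ktilde psik dbar G Q"
  have kt: "kt = Min L" unfolding kt_def ktilde_def L_def ..
  have ktL: "kt \<in> L" using kt finL Lne by simp
  have ktG: "kt \<in> G" using ktL LG by blast
  have ktmin: "\<forall>k\<in>L. kt \<le> k" using kt finL by simp
  define m where "m = Min ((\<lambda>k. dbar k + Bbar k) ` G)"
  obtain k1 where k1G: "k1 \<in> G" and k1m: "dbar k1 + Bbar k1 = m"
  proof -
    have "m \<in> (\<lambda>k. dbar k + Bbar k) ` G" unfolding m_def using fin ne by (intro Min_in) auto
    then show ?thesis using that by auto
  qed
  have m0: "0 \<le> m" using k1m k1G dnn bnn by force
  show ?thesis
  proof (cases "kt \<le> k1")
    case True
    have "norm (psik kt Q - psik k1 Q) \<le> 4 * dbar k1" using ktL k1G True unfolding L_def lepski_set_def by blast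
    moreover have "norm (psik k1 Q - t) \<le> m" using bnd k1G k1m by auto
    moreover have "norm (psik kt Q - t) \<le> norm (psik kt Q - psik k1 Q) + norm (psik k1 Q - t)"
      using norm_triangle_ineq[of "psik kt Q - psik k1 Q" "psik k1 Q - t"] by simp
    moreover have "dbar k1 \<le> m" using k1m bnn k1G by auto
    ultimately show ?thesis unfolding kt_def[symmetric] m_def[symmetric] by linarith
  next
    case False
    define J where "J = {k\<in>G. k < kt}"
    define j where "j = Max J"
    have jset_ne: "J \<noteq> {}" using k1G False unfolding J_def by auto
    have jfin: "finite J" using fin unfolding J_def by simp
    have jG: "j \<in> G" and jlt: "j < kt" using Max_in[OF jfin jset_ne] unfolding j_def J_def by auto
    have k1j: "k1 \<le> j" using k1G False jfin unfolding j_def J_def by (intro Max_ge) auto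
    have jmax: "\<forall>k\<in>G. k < kt \<longrightarrow> k \<le> j" using jfin unfolding j_def J_def by auto
    have "j \<notin> L" using jlt ktmin by force
    then obtain k' where k'G: "k' \<in> G" and jk': "j \<le> k'" and big: "norm (psik j Q - psik k' Q) > 4 * dbar k'"
      using jG unfolding L_def lepski_set_def by auto
    have "k' \<noteq> j" using big dnn jG by auto
    hence ktk': "kt \<le> k'" using jmax k'G jk' by force
    have tri: "norm (psik j Q - psik k' Q) \<le> norm (psik j Q - t) + norm (psik k' Q - t)"
      using norm_triangle_ineq4[of "psik j Q - t" "psik k' Q - t"] by simp
    have "norm (psik j Q - t) \<le> dbar j + Bbar j" "norm (psik k' Q - t) \<le> dbar k' + Bbar k'"
      using bnd jG k'G by auto
    moreover have "dbar j \<le> dbar k'" "Bbar j \<le> Bbar k1" "Bbar k' \<le> Bbar k1"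
      using dmono bmono jG k'G k1G jk' k1j by force+
    moreover have "0 \<le> dbar k1" using dnn k1G by blast
    ultimately have dk': "dbar k' \<le> m" using tri big k1m by linarith
    have "norm (psik kt Q - t) \<le> dbar kt + Bbar kt" using bnd ktG by auto
    moreover have "dbar kt \<le> dbar k'" "Bbar kt \<le> Bbar k1"
      using dmono bmono ktG k'G k1G ktk' False by force+
    moreover have "Bbar k1 \<le> m" using k1m dnn k1G by force
    ultimately show ?thesis unfolding kt_def[symmetric] m_def[symmetric] using dk' m0 by linarith
  qed
qed

lemma outer_prob_mono:
  assumes "A \<subseteq> A'" "A' \<subseteq> space M"
  shows "outer_prob M A \<le> outer_prob M A'"
  unfolding outer_prob_def
proof (rule cInf_superset_mono)
  show "{measure M B |B. B \<in> sets M \<and> A' \<subseteq> B} \<noteq> {}" using assms by blast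
  show "bdd_below {measure M B |B. B \<in> sets M \<and> A \<subseteq> B}"
    by (rule bdd_belowI[of _ 0]) auto
  show "{measure M B |B. B \<in> sets M \<and> A' \<subseteq> B} \<subseteq> {measure M B |B. B \<in> sets M \<and> A \<subseteq> B}"
    using assms by blast
qed

lemma Zs_in: "Zs \<in> Zsets Zs"
  unfolding Zsets_def using sets.top[of "restrict_space borel Zs"] by (simp add: space_restrict_space)

lemma emp_disc:
  fixes Zs :: "'a::euclidean_space set"
  assumes n: "1 \<le> n" and x: "\<forall>i. x i \<in> Zs"
  shows "emp Zs n x \<in> disc Zs"
proof -
  have ca: "emp Zs n x \<in> ca Zs"
    unfolding ca_def
  proof (intro CollectI conjI allI impI)
    show "emp Zs n x {} = 0" unfolding emp_def by simp
    fix A :: "'a set" assume "A \<notin> Zsets Zs" then show "emp Zs n x A = 0" unfolding emp_def by simp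
  next
    fix F :: "nat \<Rightarrow> 'a set" assume F: "range F \<subseteq> Zsets Zs" and dj: "disjoint_family F"
    have U: "(\<Union>i. F i) \<in> Zsets Zs" using F unfolding Zsets_def by (intro sets.countable_UN'') auto
    have "(\<lambda>i. (\<Sum>j<n. indicator (F i) (x j)) / real n) sums ((\<Sum>j<n. indicator (\<Union>i. F i) (x j)) / real n)"
      using dj by (intro sums_divide sums_sum indicator_sums) (auto simp: disjoint_family_on_def)
    moreover have "\<And>i. F i \<in> Zsets Zs" using F by auto
    ultimately show "(\<lambda>i. emp Zs n x (F i)) sums emp Zs n x (\<Union>i. F i)"
      unfolding emp_def using U by simp
  qed
  have pr: "emp Zs n x \<in> probs Zs"
    unfolding probs_def
  proof (intro CollectI conjI allI ca)
    fix A show "0 \<le> emp Zs n x A" unfolding emp_def by (auto intro!: sum_nonneg divide_nonneg_nonneg)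
  next
    show "emp Zs n x Zs = 1" using Zs_in x n unfolding emp_def by simp
  qed
  define S where "S = x ` {..<n}"
  have Sfin: "finite S" unfolding S_def by simp
  have SZ: "S \<subseteq> Zs" using x unfolding S_def by auto
  have "S \<in> Zsets Zs"
  proof -
    have "S \<in> sets borel" using Sfin by (simp add: borel_closed finite_imp_closed)
    then have "Zs \<inter> S \<in> sets (restrict_space borel Zs)" by (auto simp: sets_restrict_space)
    then show ?thesis using SZ unfolding Zsets_def by (simp add: Int_absorb1)
  qed
  then have "emp Zs n x S = 1" using n unfolding emp_def S_def by simp
  then show ?thesis unfolding disc_def using pr Sfin SZ countable_finite by blast
qed

theorem theorem2:
  fixes Zs :: "'a::euclidean_space set"
    and P :: "'a measure"
    and Mset :: "('a set \<Rightarrow> real) set"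
    and Dpsi :: "('a set \<Rightarrow> real) set"
    and Kset :: "real set"
    and psi :: "('a set \<Rightarrow> real) \<Rightarrow> 'b::real_normed_vector"
    and psik :: "real \<Rightarrow> ('a set \<Rightarrow> real) \<Rightarrow> 'b"
    and d :: "('a set \<Rightarrow> real) \<Rightarrow> ('a set \<Rightarrow> real) \<Rightarrow> real"
    and \<delta> :: "real \<Rightarrow> real \<Rightarrow> real"
    and r :: "nat \<Rightarrow> real"
    and Bbar :: "real \<Rightarrow> real"
    and dbar :: "nat \<Rightarrow> real \<Rightarrow> real"
    and G :: "nat \<Rightarrow> real set"
  defines "Pinf \<equiv> PiM (UNIV :: nat set) (\<lambda>_. P)"
  assumes P_prob: "prob_space P"
    and P_sets: "sets P = Zsets Zs"
    and Mset_sub: "Mset \<subseteq> probs Zs"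
    and P_in_M: "measure P \<in> Mset"
    and K_nonneg: "Kset \<subseteq> {0..}"
    and K_unbdd: "\<forall>x. \<exists>k\<in>Kset. x < k"
    and Dpsi_sub: "Dpsi \<subseteq> ca Zs"
    and Dpsi_sup: "Mset \<union> disc Zs \<subseteq> Dpsi"
    and regularization: "\<forall>Q\<in>Mset. filterlim (\<lambda>k. norm (psik k Q - psi Q)) (nhds 0) (inf at_top (principal Kset))"
    and d_nonneg: "\<forall>Q\<in>Dpsi. \<forall>Q'\<in>Dpsi. 0 \<le> d Q Q'"
    and d_refl: "\<forall>Q\<in>Dpsi. d Q Q = 0"
    and d_sym: "\<forall>Q\<in>Dpsi. \<forall>Q'\<in>Dpsi. d Q Q' = d Q' Q"
    and d_triangle: "\<forall>Q\<in>Dpsi. \<forall>Q'\<in>Dpsi. \<forall>Q''\<in>Dpsi. d Q Q'' \<le> d Q Q' + d Q' Q''"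
    and moduli: "\<forall>k\<in>Kset. modulus (\<delta> k)"
    and continuity: "\<forall>k\<in>Kset. \<forall>P'\<in>Dpsi. norm (psik k P' - psik k (measure P)) \<le> \<delta> k (d P' (measure P))"
    and r_pos: "\<forall>n. 0 < r n"
    and r_div: "filterlim r at_top sequentially"
    and rate: "\<forall>\<epsilon>>0. (\<lambda>n. outer_prob Pinf {\<omega> \<in> space Pinf. r n * d (emp Zs n \<omega>) (measure P) > \<epsilon>}) \<longlonglongrightarrow> 0"
    and Bbar_nonneg: "\<forall>k\<ge>0. 0 \<le> Bbar k"
    and Bbar_antimono: "\<forall>k k'. 0 \<le> k \<longrightarrow> k \<le> k' \<longrightarrow> Bbar k' \<le> Bbar k"
    and Bbar_bound: "\<forall>k\<in>Kset. norm (psik k (measure P) - psi (measure P)) \<le> Bbar k"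
    and Bbar_lim: "(Bbar \<longlongrightarrow> 0) at_top"
    and dbar_nonneg: "\<forall>n. \<forall>k\<ge>0. 0 \<le> dbar n k"
    and dbar_mono: "\<forall>n. \<forall>k k'. 0 \<le> k \<longrightarrow> k \<le> k' \<longrightarrow> dbar n k \<le> dbar n k'"
    and dbar_bound: "\<forall>n. \<forall>k\<in>Kset. \<delta> k (1 / r n) \<le> dbar n k"
    and G_fin: "\<forall>n. finite (G n)"
    and G_ne: "\<forall>n. G n \<noteq> {}"
    and G_sub: "\<forall>n. G n \<subseteq> Kset"
  shows "\<forall>\<epsilon>>0. \<exists>C. \<exists>N. \<forall>n\<ge>N.
    outer_prob Pinf {\<omega> \<in> space Pinf.
      norm (psik (ktilde psik (dbar n) (G n) (emp Zs n \<omega>)) (emp Zs n \<omega>) - psi (measure P))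
        > C * Min ((\<lambda>k. dbar n k + Bbar k) ` G n)} \<le> \<epsilon>"
proof -
  have spP: "space P = Zs"
    using sets_eq_imp_space_eq[OF P_sets[unfolded Zsets_def]] by (simp add: space_restrict_space)
  have omega: "\<forall>\<omega>\<in>space Pinf. \<forall>i. \<omega> i \<in> Zs"
    unfolding Pinf_def using spP by (auto simp: space_PiM PiE_def Pi_def)
  have PD: "measure P \<in> Dpsi" using P_in_M Dpsi_sup by blast
  have incl: "{\<omega> \<in> space Pinf.
      norm (psik (ktilde psik (dbar n) (G n) (emp Zs n \<omega>)) (emp Zs n \<omega>) - psi (measure P))
        > 5 * Min ((\<lambda>k. dbar n k + Bbar k) ` G n)}
     \<subseteq> {\<omega> \<in> space Pinf. r n * d (emp Zs n \<omega>) (measure P) > 1}" if n1: "1 \<le> n" for n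
  proof (intro subsetI)
    fix \<omega> assume w: "\<omega> \<in> {\<omega> \<in> space Pinf.
      norm (psik (ktilde psik (dbar n) (G n) (emp Zs n \<omega>)) (emp Zs n \<omega>) - psi (measure P))
        > 5 * Min ((\<lambda>k. dbar n k + Bbar k) ` G n)}"
    define Q where "Q = emp Zs n \<omega>"
    have ws: "\<omega> \<in> space Pinf" using w by blast
    have QD: "Q \<in> Dpsi" unfolding Q_def using emp_disc[OF n1] omega ws Dpsi_sup by blast
    show "\<omega> \<in> {\<omega> \<in> space Pinf. r n * d (emp Zs n \<omega>) (measure P) > 1}"
    proof (rule ccontr)
      assume "\<omega> \<notin> {\<omega> \<in> space Pinf. r n * d (emp Zs n \<omega>) (measure P) > 1}"
      then have "r n * d Q (measure P) \<le> 1" using ws unfolding Q_def by auto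
      then have dle: "d Q (measure P) \<le> 1 / r n" using r_pos[rule_format, of n]
        by (simp add: field_simps mult.commute)
      have d0: "0 \<le> d Q (measure P)" using d_nonneg QD PD by blast
      have bnd: "\<forall>k\<in>G n. norm (psik k Q - psi (measure P)) \<le> dbar n k + Bbar k"
      proof
        fix k assume kG: "k \<in> G n"
        then have kK: "k \<in> Kset" using G_sub by blast
        have "norm (psik k Q - psik k (measure P)) \<le> \<delta> k (d Q (measure P))"
          using continuity kK QD by blast
        also have "\<dots> \<le> \<delta> k (1 / r n)" using moduli kK d0 dle unfolding modulus_def by blast
        also have "\<dots> \<le> dbar n k" using dbar_bound kK by blast
        finally have a: "norm (psik k Q - psik k (measure P)) \<le> dbar n k" .
        have b: "norm (psik k (measure P) - psi (measure P)) \<le> Bbar k" using Bbar_bound kK by blast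
        have "norm (psik k Q - psi (measure P)) \<le> norm (psik k Q - psik k (measure P)) + norm (psik k (measure P) - psi (measure P))"
          using norm_triangle_ineq[of "psik k Q - psik k (measure P)" "psik k (measure P) - psi (measure P)"] by simp
        then show "norm (psik k Q - psi (measure P)) \<le> dbar n k + Bbar k" using a b by linarith
      qed
      have G0: "\<forall>k\<in>G n. 0 \<le> k" using G_sub K_nonneg by force
      have "norm (psik (ktilde psik (dbar n) (G n) Q) Q - psi (measure P)) \<le> 5 * Min ((\<lambda>k. dbar n k + Bbar k) ` G n)"
      proof (rule lepski_core[where psik=psik and Q=Q and t="psi (measure P)"])
        show "finite (G n)" using G_fin by blast
        show "G n \<noteq> {}" using G_ne by blast
        show "\<forall>k\<in>G n. 0 \<le> dbar n k" using G0 dbar_nonneg by blast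
        show "\<forall>k\<in>G n. \<forall>k'\<in>G n. k \<le> k' \<longrightarrow> dbar n k \<le> dbar n k'" using G0 dbar_mono by blast
        show "\<forall>k\<in>G n. 0 \<le> Bbar k" using G0 Bbar_nonneg by blast
        show "\<forall>k\<in>G n. \<forall>k'\<in>G n. k \<le> k' \<longrightarrow> Bbar k' \<le> Bbar k" using G0 Bbar_antimono by blast
      qed (rule bnd)
      then show False using w unfolding Q_def by auto
    qed
  qed
  show ?thesis
  proof (intro allI impI)
    fix \<epsilon> :: real assume e: "\<epsilon> > 0"
    have "(\<lambda>n. outer_prob Pinf {\<omega> \<in> space Pinf. r n * d (emp Zs n \<omega>) (measure P) > 1}) \<longlonglongrightarrow> 0"
      using rate by simp
    then obtain N where N: "\<forall>n\<ge>N. norm (outer_prob Pinf {\<omega> \<in> space Pinf. r n * d (emp Zs n \<omega>) (measure P) > 1} - 0) < \<epsilon>"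
      using e unfolding LIMSEQ_iff by blast
    show "\<exists>C N. \<forall>n\<ge>N.
      outer_prob Pinf {\<omega> \<in> space Pinf.
        norm (psik (ktilde psik (dbar n) (G n) (emp Zs n \<omega>)) (emp Zs n \<omega>) - psi (measure P))
          > C * Min ((\<lambda>k. dbar n k + Bbar k) ` G n)} \<le> \<epsilon>"
    proof (intro exI allI impI)
      fix n assume n: "max N 1 \<le> n"
      have "outer_prob Pinf {\<omega> \<in> space Pinf.
        norm (psik (ktilde psik (dbar n) (G n) (emp Zs n \<omega>)) (emp Zs n \<omega>) - psi (measure P))
          > 5 * Min ((\<lambda>k. dbar n k + Bbar k) ` G n)}
        \<le> outer_prob Pinf {\<omega> \<in> space Pinf. r n * d (emp Zs n \<omega>) (measure P) > 1}"
        using n by (intro outer_prob_mono incl) auto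
      also have "\<dots> \<le> \<epsilon>" using N n by force
      finally show "outer_prob Pinf {\<omega> \<in> space Pinf.
        norm (psik (ktilde psik (dbar n) (G n) (emp Zs n \<omega>)) (emp Zs n \<omega>) - psi (measure P))
          > 5 * Min ((\<lambda>k. dbar n k + Bbar k) ` G n)} \<le> \<epsilon>" .
    qed
  qed
qed

end
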